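(* Let $f$ be a holomorphic quadratic self-map of $\mathbb{P}^2$ preserving the line $\ell=\{z_1=0\}$, written $[z_1:z_2:z_3]\mapsto[z_1\widehat L:z_2\widehat L-\widehat P:z_3\widehat L-\widehat Q]$ with $\widehat L$ linear and $\widehat P,\widehat Q$ quadratic homogeneous forms, and set $L(x,y)=\widehat L(1,x,y)$, $P(x,y)=\widehat P(1,x,y)$, $Q(x,y)=\widehat Q(1,x,y)$. Suppose $f$ has exactly four fixed points $p_1,\dots,p_4$ off $\ell$, all non-degenerate, and let $t_i,d_i$ be the trace and determinant of $\mathbf{I}-Df|_{p_i}$. Then $p_1,\dots,p_4$ are common zeros of $P,Q$ with $L(p_i)\ne0$, the Jacobian matrix of $(P,Q)$ at $p_i$ equals $L(p_i)(\mathbf{I}-Df|_{p_i})$ (in the affine coordinates $(x,y)$ of $[1:x:y]$), and $$\sum_{i=1}^4\frac{1}{L(p_i)^2d_i}=0,\quad \sum_{i=1}^4\frac{x(p_i)}{L(p_i)^2d_i}=0,\quad \sum_{i=1}^4\frac{y(p_i)}{L(p_i)^2d_i}=0,\quad \sum_{i=1}^4\frac{t_i}{L(p_i)d_i}=0,\quad \sum_{i=1}^4\frac{1}{L(p_i)d_i}=0.$$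
   Context: A holomorphic quadratic self-map of $\mathbb{P}^2$ is given by three quadratic homogeneous polynomials without common nontrivial zeros; a fixed point $p$ is non-degenerate if $\det(\mathbf{I}-Df|_p)\ne0$. In the affine chart $z_1\ne0$ with coordinates $[1:x:y]$, $f(x,y)=(x-P/L,\,y-Q/L)$. *)

theory Defs
  imports "HOL-Analysis.Analysis"
begin

definition lin_form3 :: "(complex \<Rightarrow> complex \<Rightarrow> complex \<Rightarrow> complex) \<Rightarrow> bool" where
  "lin_form3 F \<longleftrightarrow> (\<exists>a1 a2 a3. \<forall>u v w. F u v w = a1 * u + a2 * v + a3 * w)"

definition quad_form3 :: "(complex \<Rightarrow> complex \<Rightarrow> complex \<Rightarrow> complex) \<Rightarrow> bool" where
  "quad_form3 F \<longleftrightarrow> (\<exists>c1 c2 c3 c4 c5 c6. \<forall>u v w.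
     F u v w = c1 * u * u + c2 * v * v + c3 * w * w + c4 * u * v + c5 * u * w + c6 * v * w)"

text \<open>The map [z1:z2:z3] \<mapsto> [z1 Lh : z2 Lh - Ph : z3 Lh - Qh] is holomorphic on P^2:
  the three components have no common nontrivial zero.\<close>

definition holo_map :: "(complex \<Rightarrow> complex \<Rightarrow> complex \<Rightarrow> complex) \<Rightarrow>
    (complex \<Rightarrow> complex \<Rightarrow> complex \<Rightarrow> complex) \<Rightarrow>
    (complex \<Rightarrow> complex \<Rightarrow> complex \<Rightarrow> complex) \<Rightarrow> bool" where
  "holo_map Lh Ph Qh \<longleftrightarrow> (\<forall>u v w.
     u * Lh u v w = 0 \<and> v * Lh u v w - Ph u v w = 0 \<and> w * Lh u v w - Qh u v w = 0
     \<longrightarrow> u = 0 \<and> v = 0 \<and> w = 0)"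

text \<open>Fixed point off the line z1 = 0, written as [1:x:y]: the image is a nonzero multiple
  of the representative (1,x,y).\<close>

definition fixed_off :: "(complex \<Rightarrow> complex \<Rightarrow> complex \<Rightarrow> complex) \<Rightarrow>
    (complex \<Rightarrow> complex \<Rightarrow> complex \<Rightarrow> complex) \<Rightarrow>
    (complex \<Rightarrow> complex \<Rightarrow> complex \<Rightarrow> complex) \<Rightarrow> complex \<times> complex \<Rightarrow> bool" where
  "fixed_off Lh Ph Qh q \<longleftrightarrow> (\<exists>c. c \<noteq> 0 \<and>
     1 * Lh 1 (fst q) (snd q) = c * 1 \<and>
     fst q * Lh 1 (fst q) (snd q) - Ph 1 (fst q) (snd q) = c * fst q \<and>
     snd q * Lh 1 (fst q) (snd q) - Qh 1 (fst q) (snd q) = c * snd q)"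

definition pd1 :: "(complex \<Rightarrow> complex \<Rightarrow> complex) \<Rightarrow> complex \<times> complex \<Rightarrow> complex" where
  "pd1 g q = deriv (\<lambda>s. g s (snd q)) (fst q)"

definition pd2 :: "(complex \<Rightarrow> complex \<Rightarrow> complex) \<Rightarrow> complex \<times> complex \<Rightarrow> complex" where
  "pd2 g q = deriv (\<lambda>s. g (fst q) s) (snd q)"

definition jac :: "(complex \<Rightarrow> complex \<Rightarrow> complex) \<Rightarrow> (complex \<Rightarrow> complex \<Rightarrow> complex) \<Rightarrow>
    complex \<times> complex \<Rightarrow> complex^2^2" where
  "jac g1 g2 q = (\<chi> i j. (if i = 1 then (if j = 1 then pd1 g1 q else pd2 g1 q)
                                   else (if j = 1 then pd1 g2 q else pd2 g2 q)))"

definition aff :: "(complex \<Rightarrow> complex \<Rightarrow> complex \<Rightarrow> complex) \<Rightarrow> complex \<Rightarrow> complex \<Rightarrow> complex" where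
  "aff F x y = F 1 x y"

definition Df :: "(complex \<Rightarrow> complex \<Rightarrow> complex \<Rightarrow> complex) \<Rightarrow>
    (complex \<Rightarrow> complex \<Rightarrow> complex \<Rightarrow> complex) \<Rightarrow>
    (complex \<Rightarrow> complex \<Rightarrow> complex \<Rightarrow> complex) \<Rightarrow> complex \<times> complex \<Rightarrow> complex^2^2" where
  "Df Lh Ph Qh q = jac (\<lambda>x y. x - aff Ph x y / aff Lh x y) (\<lambda>x y. y - aff Qh x y / aff Lh x y) q"

definition nondeg where
  "nondeg Lh Ph Qh q \<longleftrightarrow> det (mat 1 - Df Lh Ph Qh q) \<noteq> 0"

end

theory Submission
  imports Defs
begin

definition qv :: "(nat \<Rightarrow> complex) \<Rightarrow> complex \<Rightarrow> complex \<Rightarrow> complex" where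
 "qv a x y = a 1 + a 2 * x * x + a 3 * y * y + a 4 * x + a 5 * y + a 6 * x * y"
definition gxv :: "(nat \<Rightarrow> complex) \<Rightarrow> complex \<Rightarrow> complex \<Rightarrow> complex" where
 "gxv a x y = 2 * a 2 * x + a 4 + a 6 * y"
definition gyv :: "(nat \<Rightarrow> complex) \<Rightarrow> complex \<Rightarrow> complex \<Rightarrow> complex" where
 "gyv a x y = 2 * a 3 * y + a 5 + a 6 * x"
definition Jv :: "(nat \<Rightarrow> complex) \<Rightarrow> (nat \<Rightarrow> complex) \<Rightarrow> complex \<Rightarrow> complex \<Rightarrow> complex" where
 "Jv a b x y = gxv a x y * gyv b x y - gyv a x y * gxv b x y"
definition Dt :: "complex \<Rightarrow> complex \<Rightarrow> complex \<Rightarrow> complex \<Rightarrow> complex \<Rightarrow> complex \<Rightarrow> complex" where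
 "Dt x1 y1 x2 y2 x3 y3 = (x2-x1) *(y3-y1) - (x3-x1) *(y2-y1)"
definition fq :: "(nat \<Rightarrow> complex) \<Rightarrow> complex \<Rightarrow> complex \<Rightarrow> complex" where
 "fq a u v = a 2 * u * u + a 3 * v * v + a 6 * u * v"

lemma grad_dot:
  assumes "qv a x1 y1 = 0" "qv a x2 y2 = 0"
  shows "gxv a x1 y1 * (x2-x1) + gyv a x1 y1 * (y2-y1) = - fq a (x2-x1) (y2-y1)"
proof -
  have "qv a x2 y2 - qv a x1 y1 = gxv a x1 y1 * (x2-x1) + gyv a x1 y1 * (y2-y1) + fq a (x2-x1) (y2-y1)"
    unfolding qv_def gxv_def gyv_def fq_def by algebra
  with assms show ?thesis by (simp add: algebra_simps)
qed

lemma J_times_D: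
  assumes "qv a x1 y1 = 0" "qv a x2 y2 = 0" "qv a x3 y3 = 0"
    "qv b x1 y1 = 0" "qv b x2 y2 = 0" "qv b x3 y3 = 0"
  shows "Jv a b x1 y1 * Dt x1 y1 x2 y2 x3 y3 =
     fq a (x2-x1) (y2-y1) * fq b (x3-x1) (y3-y1) - fq a (x3-x1) (y3-y1) * fq b (x2-x1) (y2-y1)"
proof -
  note g1 = grad_dot[OF assms(1,2)] and g2 = grad_dot[OF assms(1,3)]
   and h1 = grad_dot[OF assms(4,5)] and h2 = grad_dot[OF assms(4,6)]
  have "Jv a b x1 y1 * Dt x1 y1 x2 y2 x3 y3 =
     (gxv a x1 y1 * (x2-x1) + gyv a x1 y1 * (y2-y1)) * (gxv b x1 y1 * (x3-x1) + gyv b x1 y1 * (y3-y1))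
   - (gxv a x1 y1 * (x3-x1) + gyv a x1 y1 * (y3-y1)) * (gxv b x1 y1 * (x2-x1) + gyv b x1 y1 * (y2-y1))"
    unfolding Jv_def Dt_def by algebra
  also have "\<dots> = fq a (x2-x1) (y2-y1) * fq b (x3-x1) (y3-y1) - fq a (x3-x1) (y3-y1) * fq b (x2-x1) (y2-y1)"
    unfolding g1 g2 h1 h2 by algebra
  finally show ?thesis .
qed

definition lam1 where "lam1 x1 y1 x2 y2 x3 y3 x4 y4 =
   Dt x2 y2 x3 y3 x4 y4 * (x1 * x1) - Dt x1 y1 x3 y3 x4 y4 * (x2 * x2) + Dt x1 y1 x2 y2 x4 y4 * (x3 * x3) - Dt x1 y1 x2 y2 x3 y3 * (x4 * x4)"
definition lam2 where "lam2 x1 y1 x2 y2 x3 y3 x4 y4 =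
   Dt x2 y2 x3 y3 x4 y4 * (y1 * y1) - Dt x1 y1 x3 y3 x4 y4 * (y2 * y2) + Dt x1 y1 x2 y2 x4 y4 * (y3 * y3) - Dt x1 y1 x2 y2 x3 y3 * (y4 * y4)"
definition lam3 where "lam3 x1 y1 x2 y2 x3 y3 x4 y4 =
   Dt x2 y2 x3 y3 x4 y4 * (x1 * y1) - Dt x1 y1 x3 y3 x4 y4 * (x2 * y2) + Dt x1 y1 x2 y2 x4 y4 * (x3 * y3) - Dt x1 y1 x2 y2 x3 y3 * (x4 * y4)"

lemma lam_dot:
  assumes "qv a x1 y1 = 0" "qv a x2 y2 = 0" "qv a x3 y3 = 0" "qv a x4 y4 = 0"
  shows "lam1 x1 y1 x2 y2 x3 y3 x4 y4 * a 2 + lam2 x1 y1 x2 y2 x3 y3 x4 y4 * a 3 + lam3 x1 y1 x2 y2 x3 y3 x4 y4 * a 6 = 0"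
proof -
  have "lam1 x1 y1 x2 y2 x3 y3 x4 y4 * a 2 + lam2 x1 y1 x2 y2 x3 y3 x4 y4 * a 3 + lam3 x1 y1 x2 y2 x3 y3 x4 y4 * a 6
    = Dt x2 y2 x3 y3 x4 y4 * qv a x1 y1 - Dt x1 y1 x3 y3 x4 y4 * qv a x2 y2 + Dt x1 y1 x2 y2 x4 y4 * qv a x3 y3 - Dt x1 y1 x2 y2 x3 y3 * qv a x4 y4"
    unfolding lam1_def lam2_def lam3_def qv_def Dt_def by algebra
  with assms show ?thesis by simp
qed

definition det3 :: "complex \<Rightarrow> complex \<Rightarrow> complex \<Rightarrow> complex \<Rightarrow> complex \<Rightarrow> complex \<Rightarrow> complex \<Rightarrow> complex \<Rightarrow> complex \<Rightarrow> complex" where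
 "det3 a1 a2 a3 b1 b2 b3 c1 c2 c3 = a1 *(b2 * c3 - b3 * c2) - a2 *(b1 * c3-b3 * c1) + a3 *(b1 * c2 - b2 * c1)"

lemma E_lemma:
  fixes l1 l2 l3 :: complex
  assumes "l1 * a 2+l2 * a 3+l3 * a 6 = 0" "l1 * b 2+l2 * b 3+l3 * b 6 = 0"
  shows "(fq a s1 t1 * fq b s2 t2 - fq a s2 t2 * fq b s1 t1) * det3 l1 l2 l3 (s3 * s3) (t3 * t3) (s3 * t3) (s4 * s4) (t4 * t4) (s4 * t4)
    = (fq a s3 t3 * fq b s4 t4 - fq a s4 t4 * fq b s3 t3) * det3 l1 l2 l3 (s1 * s1) (t1 * t1) (s1 * t1) (s2 * s2) (t2 * t2) (s2 * t2)"
  using assms unfolding det3_def fq_def by algebra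

lemma Lam1:
 "det3 (lam1 x1 y1 x2 y2 x3 y3 x4 y4) (lam2 x1 y1 x2 y2 x3 y3 x4 y4) (lam3 x1 y1 x2 y2 x3 y3 x4 y4)
   ((x2-x1) *(x2-x1)) ((y2-y1) *(y2-y1)) ((x2-x1) *(y2-y1)) ((x3-x1) *(x3-x1)) ((y3-y1) *(y3-y1)) ((x3-x1) *(y3-y1))
  = (Dt x1 y1 x2 y2 x3 y3)^2 * Dt x1 y1 x2 y2 x4 y4 * Dt x1 y1 x3 y3 x4 y4"
  unfolding det3_def lam1_def lam2_def lam3_def Dt_def by algebra

lemma Lam2:
 "det3 (lam1 x1 y1 x2 y2 x3 y3 x4 y4) (lam2 x1 y1 x2 y2 x3 y3 x4 y4) (lam3 x1 y1 x2 y2 x3 y3 x4 y4)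
   ((x1-x2) *(x1-x2)) ((y1-y2) *(y1-y2)) ((x1-x2) *(y1-y2)) ((x3-x2) *(x3-x2)) ((y3-y2) *(y3-y2)) ((x3-x2) *(y3-y2))
  = (Dt x1 y1 x2 y2 x3 y3)^2 * Dt x1 y1 x2 y2 x4 y4 * Dt x2 y2 x3 y3 x4 y4"
  unfolding det3_def lam1_def lam2_def lam3_def Dt_def by algebra

lemma Dt_swap: "Dt x2 y2 x1 y1 x3 y3 = - Dt x1 y1 x2 y2 x3 y3"
  unfolding Dt_def by algebra
lemma cancel_aux: fixes X A B e f :: complex shows "X \<noteq> 0 \<Longrightarrow> A *(X * e) = B *(X * f) \<Longrightarrow> A * e = B * f"
  by (metis mult.left_commute mult_left_cancel)
lemma final_aux: fixes d j1 j2 A B e f :: complex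
  shows "d \<noteq> 0 \<Longrightarrow> j1 * d = A \<Longrightarrow> j2 * d = -B \<Longrightarrow> A * e = B * f \<Longrightarrow> j1 * e = - j2 * f"
proof -
  assume h: "d \<noteq> 0" "j1 * d = A" "j2 * d = -B" "A * e = B * f"
  have "d *(j1 * e) = d *(- j2 * f)" using h(2-4) by (metis minus_minus minus_mult_left mult.commute mult.left_commute)
  with h(1) show ?thesis by (metis mult_left_cancel mult_minus_right)
qed
lemma pair_rel:
  assumes "qv a x1 y1 = 0" "qv a x2 y2 = 0" "qv a x3 y3 = 0" "qv a x4 y4 = 0"
    "qv b x1 y1 = 0" "qv b x2 y2 = 0" "qv b x3 y3 = 0" "qv b x4 y4 = 0"
    "Dt x1 y1 x2 y2 x3 y3 \<noteq> 0" "Dt x1 y1 x2 y2 x4 y4 \<noteq> 0"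
  shows "Jv a b x1 y1 * Dt x2 y2 x3 y3 x4 y4 = - Jv a b x2 y2 * Dt x1 y1 x3 y3 x4 y4"
proof -
  have A: "Jv a b x1 y1 * Dt x1 y1 x2 y2 x3 y3 =
     fq a (x2-x1) (y2-y1) * fq b (x3-x1) (y3-y1) - fq a (x3-x1) (y3-y1) * fq b (x2-x1) (y2-y1)"
    by (rule J_times_D) (use assms in auto)
  have B0: "Jv a b x2 y2 * Dt x2 y2 x1 y1 x3 y3 =
     fq a (x1-x2) (y1-y2) * fq b (x3-x2) (y3-y2) - fq a (x3-x2) (y3-y2) * fq b (x1-x2) (y1-y2)"
    by (rule J_times_D) (use assms in auto)
  have B: "Jv a b x2 y2 * Dt x1 y1 x2 y2 x3 y3 =
     -(fq a (x1-x2) (y1-y2) * fq b (x3-x2) (y3-y2) - fq a (x3-x2) (y3-y2) * fq b (x1-x2) (y1-y2))"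
  proof -
    have "- (Jv a b x2 y2 * Dt x1 y1 x2 y2 x3 y3) = fq a (x1 - x2) (y1 - y2) * fq b (x3 - x2) (y3 - y2) -
      fq a (x3 - x2) (y3 - y2) * fq b (x1 - x2) (y1 - y2)" using B0 Dt_swap[of x2 y2 x1 y1 x3 y3] by simp
    then show ?thesis by (metis minus_minus)
  qed
  have la: "lam1 x1 y1 x2 y2 x3 y3 x4 y4 * a 2 + lam2 x1 y1 x2 y2 x3 y3 x4 y4 * a 3 + lam3 x1 y1 x2 y2 x3 y3 x4 y4 * a 6 = 0"
    by (rule lam_dot) (use assms in auto)
  have lb: "lam1 x1 y1 x2 y2 x3 y3 x4 y4 * b 2 + lam2 x1 y1 x2 y2 x3 y3 x4 y4 * b 3 + lam3 x1 y1 x2 y2 x3 y3 x4 y4 * b 6 = 0"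
    by (rule lam_dot) (use assms in auto)
  define A' where "A' = fq a (x2-x1) (y2-y1) * fq b (x3-x1) (y3-y1) - fq a (x3-x1) (y3-y1) * fq b (x2-x1) (y2-y1)"
  define B' where "B' = fq a (x1-x2) (y1-y2) * fq b (x3-x2) (y3-y2) - fq a (x3-x2) (y3-y2) * fq b (x1-x2) (y1-y2)"
  define X where "X = (Dt x1 y1 x2 y2 x3 y3)^2 * Dt x1 y1 x2 y2 x4 y4"
  have E: "A' * (X * Dt x2 y2 x3 y3 x4 y4) = B' * (X * Dt x1 y1 x3 y3 x4 y4)"
    using E_lemma[OF la lb, of "x2-x1" "y2-y1" "x3-x1" "y3-y1" "x1-x2" "y1-y2" "x3-x2" "y3-y2"]
    unfolding Lam1 Lam2 A'_def[symmetric] B'_def[symmetric] X_def[symmetric] by (simp add: mult.assoc)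
  have X0: "X \<noteq> 0" using assms(9,10) unfolding X_def by simp
  have E3: "A' * Dt x2 y2 x3 y3 x4 y4 = B' * Dt x1 y1 x3 y3 x4 y4"
    using cancel_aux[OF X0 E] .
  show ?thesis
    by (rule final_aux[OF assms(9) A[folded A'_def] B[folded B'_def] E3])
qed

lemma ex_s: fixes u1 u2 v1 v2 :: complex
  assumes "u1 \<noteq> 0 \<or> u2 \<noteq> 0" "u1 * v2 - v1 * u2 = 0"
  shows "\<exists>s. v1 = s * u1 \<and> v2 = s * u2"
proof (cases "u1 = 0")
  case True
  with assms have "u2 \<noteq> 0" "v1 = 0" by auto
  then show ?thesis using True by (intro exI[of _ "v2/u2"]) simp
next
  case False
  have "v2 = v1/u1 * u2" using assms(2) False by (simp add: field_simps)
  then show ?thesis using False by (intro exI[of _ "v1/u1"]) simp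
qed

lemma col_aux: fixes gx gy Fu u1 u2 s :: complex
  assumes "gx * u1+gy * u2 = -Fu" "gx *(s * u1) + gy *(s * u2) = -(s * s * Fu)" "s\<noteq>0" "s\<noteq>1"
  shows "gx * u1+gy * u2 = 0"
proof -
  have "s *(gx * u1+gy * u2) = gx *(s * u1) + gy *(s * u2)" by (simp add: algebra_simps)
  hence "s *(-Fu) = -(s * s * Fu)" using assms by simp
  hence "s *(s-1) * Fu = 0" by (simp add: algebra_simps)
  hence "Fu = 0" using assms(3,4) by simp
  thus ?thesis using assms(1) by simp
qed

lemma det_zero_aux: fixes gx gy hx hy u1 u2 :: complex
  assumes "gx * u1+gy * u2 = 0" "hx * u1+hy * u2 = 0" "u1 \<noteq> 0 \<or> u2 \<noteq> 0"
  shows "gx * hy - gy * hx = 0"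
proof -
  have "(gx * hy - gy * hx) * u1 = hy *(gx * u1+gy * u2) - gy *(hx * u1+hy * u2)" by (simp add: algebra_simps)
  hence a: "(gx * hy - gy * hx) * u1 = 0" using assms by simp
  have "(gx * hy - gy * hx) * u2 = gx *(hx * u1+hy * u2) - hx *(gx * u1+gy * u2)" by (simp add: algebra_simps)
  hence b: "(gx * hy - gy * hx) * u2 = 0" using assms by simp
  from a b assms(3) show ?thesis by auto
qed

lemma fq_scale: "fq a (s * u1) (s * u2) = s * s * fq a u1 u2"
  unfolding fq_def by (simp add: algebra_simps)

lemma collinear_J:
  assumes "qv a x1 y1 = 0" "qv a x2 y2 = 0" "qv a x3 y3 = 0"
    "qv b x1 y1 = 0" "qv b x2 y2 = 0" "qv b x3 y3 = 0"
    "(x1,y1) \<noteq> (x2,y2)" "(x1,y1) \<noteq> (x3,y3)" "(x2,y2) \<noteq> (x3,y3)"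
    "Dt x1 y1 x2 y2 x3 y3 = 0"
  shows "Jv a b x1 y1 = 0"
proof -
  have u: "x2-x1 \<noteq> 0 \<or> y2-y1 \<noteq> 0" using assms(7) by auto
  obtain s where s: "x3-x1 = s *(x2-x1)" "y3-y1 = s *(y2-y1)"
  proof -
    have "(x2-x1) *(y3-y1) - (x3-x1) *(y2-y1) = 0" using assms(10) unfolding Dt_def .
    from ex_s[OF u this] show ?thesis using that by blast
  qed
  have s0: "s \<noteq> 0" using s assms(8) by auto
  have s1: "s \<noteq> 1" using s assms(9) by auto
  have ga: "gxv a x1 y1 *(x2-x1)+gyv a x1 y1 *(y2-y1) = 0"
    apply (rule col_aux[OF grad_dot[OF assms(1,2)] _ s0 s1])
    using grad_dot[OF assms(1,3)] unfolding s fq_scale .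
  have gb: "gxv b x1 y1 *(x2-x1)+gyv b x1 y1 *(y2-y1) = 0"
    apply (rule col_aux[OF grad_dot[OF assms(4,5)] _ s0 s1])
    using grad_dot[OF assms(4,6)] unfolding s fq_scale .
  show ?thesis unfolding Jv_def by (rule det_zero_aux[OF ga gb u])
qed

lemma Dt_swap23: "Dt x1 y1 x3 y3 x2 y2 = - Dt x1 y1 x2 y2 x3 y3"
  unfolding Dt_def by algebra
lemma Dt_cyc: "Dt x2 y2 x3 y3 x1 y1 = Dt x1 y1 x2 y2 x3 y3"
  unfolding Dt_def by algebra

lemma EJ:
  assumes "qv a x1 y1 = 0" "qv a x2 y2 = 0" "qv a x3 y3 = 0" "qv a x4 y4 = 0"
    "qv b x1 y1 = 0" "qv b x2 y2 = 0" "qv b x3 y3 = 0" "qv b x4 y4 = 0"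
    "(x1,y1) \<noteq> (x2,y2)" "(x1,y1) \<noteq> (x3,y3)" "(x1,y1) \<noteq> (x4,y4)"
    "(x2,y2) \<noteq> (x3,y3)" "(x2,y2) \<noteq> (x4,y4)" "(x3,y3) \<noteq> (x4,y4)"
    "Jv a b x1 y1 \<noteq> 0" "Jv a b x2 y2 \<noteq> 0" "Jv a b x3 y3 \<noteq> 0" "Jv a b x4 y4 \<noteq> 0"
  shows "(al + be * x1 + ga * y1) / Jv a b x1 y1 + (al + be * x2 + ga * y2) / Jv a b x2 y2
       + (al + be * x3 + ga * y3) / Jv a b x3 y3 + (al + be * x4 + ga * y4) / Jv a b x4 y4 = 0"
proof -
  have d123: "Dt x1 y1 x2 y2 x3 y3 \<noteq> 0"
    using collinear_J[of a x1 y1 x2 y2 x3 y3 b] assms by blast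
  have d124: "Dt x1 y1 x2 y2 x4 y4 \<noteq> 0"
    using collinear_J[of a x1 y1 x2 y2 x4 y4 b] assms by blast
  have d134: "Dt x1 y1 x3 y3 x4 y4 \<noteq> 0"
    using collinear_J[of a x1 y1 x3 y3 x4 y4 b] assms by blast
  have d234: "Dt x2 y2 x3 y3 x4 y4 \<noteq> 0"
    using collinear_J[of a x2 y2 x3 y3 x4 y4 b] assms by blast
  define K where "K = Jv a b x1 y1 * Dt x2 y2 x3 y3 x4 y4"
  have K0: "K \<noteq> 0" unfolding K_def using assms(15) d234 by simp
  have R2: "Jv a b x2 y2 * Dt x1 y1 x3 y3 x4 y4 = - K"
    using pair_rel[of a x1 y1 x2 y2 x3 y3 x4 y4 b] assms d123 d124 unfolding K_def by simp
  have R3: "Jv a b x3 y3 * Dt x1 y1 x2 y2 x4 y4 = K"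
  proof -
    have "Jv a b x1 y1 * Dt x3 y3 x2 y2 x4 y4 = - Jv a b x3 y3 * Dt x1 y1 x2 y2 x4 y4"
      by (rule pair_rel) (use assms d123 d134 Dt_swap23[of x1 y1 x2 y2 x3 y3] in auto)
    then show ?thesis unfolding K_def Dt_swap[of x3 y3 x2 y2 x4 y4] by simp
  qed
  have R4: "Jv a b x4 y4 * Dt x1 y1 x2 y2 x3 y3 = - K"
  proof -
    have "Jv a b x1 y1 * Dt x4 y4 x2 y2 x3 y3 = - Jv a b x4 y4 * Dt x1 y1 x2 y2 x3 y3"
      by (rule pair_rel) (use assms d124 d134 Dt_swap23[of x1 y1 x2 y2 x4 y4] Dt_swap23[of x1 y1 x3 y3 x4 y4] in auto)
    then show ?thesis unfolding K_def Dt_cyc[of x2 y2 x3 y3 x4 y4] by simp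
  qed
  have e1: "(al + be * x1 + ga * y1) / Jv a b x1 y1 = (al + be * x1 + ga * y1) * Dt x2 y2 x3 y3 x4 y4 / K"
    unfolding K_def using d234 by simp
  have e2: "(al + be * x2 + ga * y2) / Jv a b x2 y2 = - ((al + be * x2 + ga * y2) * Dt x1 y1 x3 y3 x4 y4) / K"
    using R2 d134 assms(16) K0 by (simp add: field_simps)
  have e3: "(al + be * x3 + ga * y3) / Jv a b x3 y3 = (al + be * x3 + ga * y3) * Dt x1 y1 x2 y2 x4 y4 / K"
    using R3 d124 assms(17) K0 by (simp add: field_simps)
  have e4: "(al + be * x4 + ga * y4) / Jv a b x4 y4 = - ((al + be * x4 + ga * y4) * Dt x1 y1 x2 y2 x3 y3) / K"
    using R4 d123 assms(18) K0 by (simp add: field_simps)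
  have id: "(al + be * x1 + ga * y1) * Dt x2 y2 x3 y3 x4 y4 - (al + be * x2 + ga * y2) * Dt x1 y1 x3 y3 x4 y4
     + (al + be * x3 + ga * y3) * Dt x1 y1 x2 y2 x4 y4 - (al + be * x4 + ga * y4) * Dt x1 y1 x2 y2 x3 y3 = 0"
    unfolding Dt_def by algebra
  show ?thesis unfolding e1 e2 e3 e4
    by (metis (no_types, lifting) id add_divide_distrib diff_conv_add_uminus div_0 minus_divide_left)
qed

lemma deriv_quot1:
  assumes "(f has_field_derivative f') (at t)" "(g has_field_derivative g') (at t)" "g t \<noteq> 0" "f t = 0"
  shows "deriv (\<lambda>s. s - f s / g s) t = 1 - f' / g t"
proof -
  have "((\<lambda>s. s - f s / g s) has_field_derivative (1 - (f' * g t - f t * g') / (g t * g t))) (at t)"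
    by (intro derivative_intros assms)
  moreover have "1 - (f' * g t - f t * g') / (g t * g t) = 1 - f' / g t" using assms(3,4) by simp
  ultimately show ?thesis using DERIV_imp_deriv by metis
qed

lemma deriv_quot0:
  assumes "(f has_field_derivative f') (at t)" "(g has_field_derivative g') (at t)" "g t \<noteq> 0" "f t = 0"
  shows "deriv (\<lambda>s. c - f s / g s) t = - (f' / g t)"
proof -
  have "((\<lambda>s. c - f s / g s) has_field_derivative (0 - (f' * g t - f t * g') / (g t * g t))) (at t)"
    by (intro derivative_intros assms)
  moreover have "0 - (f' * g t - f t * g') / (g t * g t) = - (f' / g t)" using assms(3,4) by simp
  ultimately show ?thesis using DERIV_imp_deriv by metis
qed

lemma qv_d1: "((\<lambda>s. qv a s y) has_field_derivative gxv a x y) (at x)"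
  unfolding qv_def gxv_def by (auto intro!: derivative_eq_intros simp: algebra_simps)
lemma qv_d2: "((\<lambda>s. qv a x s) has_field_derivative gyv a x y) (at y)"
  unfolding qv_def gyv_def by (auto intro!: derivative_eq_intros simp: algebra_simps)
lemma lf_d1: "((\<lambda>s. k1 + k2 * s + k3 * (y::complex)) has_field_derivative k2) (at x)"
  by (auto intro!: derivative_eq_intros)
lemma lf_d2: "((\<lambda>s. k1 + k2 * (x::complex) + k3 * s) has_field_derivative k3) (at y)"
  by (auto intro!: derivative_eq_intros)

lemma sum4: "(\<Sum>i<4::nat. f i) = f 0 + f 1 + f 2 + f (3::nat)"
  by (simp add: eval_nat_numeral)

theorem mainTheorem6:
  fixes Lh Ph Qh :: "complex \<Rightarrow> complex \<Rightarrow> complex \<Rightarrow> complex"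
    and p :: "nat \<Rightarrow> complex \<times> complex"
  assumes "lin_form3 Lh" and "quad_form3 Ph" and "quad_form3 Qh"
    and "holo_map Lh Ph Qh"
    and "inj_on p {..<4}"
    and "{q. fixed_off Lh Ph Qh q} = p ` {..<4}"
    and "\<forall>i<4. nondeg Lh Ph Qh (p i)"
  shows "(\<forall>i<4. aff Ph (fst (p i)) (snd (p i)) = 0 \<and> aff Qh (fst (p i)) (snd (p i)) = 0
           \<and> aff Lh (fst (p i)) (snd (p i)) \<noteq> 0
           \<and> jac (aff Ph) (aff Qh) (p i)
               = mat (aff Lh (fst (p i)) (snd (p i))) ** (mat 1 - Df Lh Ph Qh (p i)))
    \<and> (\<Sum>i<4. 1 / ((aff Lh (fst (p i)) (snd (p i)))\<^sup>2 * det (mat 1 - Df Lh Ph Qh (p i)))) = 0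
    \<and> (\<Sum>i<4. fst (p i) / ((aff Lh (fst (p i)) (snd (p i)))\<^sup>2 * det (mat 1 - Df Lh Ph Qh (p i)))) = 0
    \<and> (\<Sum>i<4. snd (p i) / ((aff Lh (fst (p i)) (snd (p i)))\<^sup>2 * det (mat 1 - Df Lh Ph Qh (p i)))) = 0
    \<and> (\<Sum>i<4. trace (mat 1 - Df Lh Ph Qh (p i)) / (aff Lh (fst (p i)) (snd (p i)) * det (mat 1 - Df Lh Ph Qh (p i)))) = 0
    \<and> (\<Sum>i<4. 1 / (aff Lh (fst (p i)) (snd (p i)) * det (mat 1 - Df Lh Ph Qh (p i)))) = 0"
proof -
  obtain k1 k2 k3 where Lh: "\<And>u v w. Lh u v w = k1 * u + k2 * v + k3 * w"
    using assms(1) unfolding lin_form3_def by blast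
  obtain c1 c2 c3 c4 c5 c6 where Ph: "\<And>u v w.
     Ph u v w = c1 * u * u + c2 * v * v + c3 * w * w + c4 * u * v + c5 * u * w + c6 * v * w"
    using assms(2) unfolding quad_form3_def by blast
  obtain d1 d2 d3 d4 d5 d6 where Qh: "\<And>u v w.
     Qh u v w = d1 * u * u + d2 * v * v + d3 * w * w + d4 * u * v + d5 * u * w + d6 * v * w"
    using assms(3) unfolding quad_form3_def by blast
  define a :: "nat \<Rightarrow> complex" where "a = (\<lambda>n. [0,c1,c2,c3,c4,c5,c6] ! n)"
  define b :: "nat \<Rightarrow> complex" where "b = (\<lambda>n. [0,d1,d2,d3,d4,d5,d6] ! n)"
  have affP: "\<And>x y. aff Ph x y = qv a x y" unfolding aff_def Ph a_def qv_def by simp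
  have affQ: "\<And>x y. aff Qh x y = qv b x y" unfolding aff_def Qh b_def qv_def by simp
  have affL: "\<And>x y. aff Lh x y = k1 + k2 * x + k3 * y" unfolding aff_def Lh by simp
  have fix_pt: "qv a (fst q) (snd q) = 0 \<and> qv b (fst q) (snd q) = 0 \<and> k1 + k2 * fst q + k3 * snd q \<noteq> 0"
    if "fixed_off Lh Ph Qh q" for q
  proof -
    from that obtain c where c0: "c \<noteq> 0 \<and> 1 * Lh 1 (fst q) (snd q) = c * 1 \<and>
       fst q * Lh 1 (fst q) (snd q) - Ph 1 (fst q) (snd q) = c * fst q \<and>
       snd q * Lh 1 (fst q) (snd q) - Qh 1 (fst q) (snd q) = c * snd q"
      unfolding fixed_off_def by (rule exE)
    note c = conjunct1[OF c0] conjunct1[OF conjunct2[OF c0]] conjunct1[OF conjunct2[OF conjunct2[OF c0]]]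
      conjunct2[OF conjunct2[OF conjunct2[OF c0]]]
    have L: "Lh 1 (fst q) (snd q) = c" using c(2) by simp
    have "Ph 1 (fst q) (snd q) = 0" using c(3) unfolding L by (simp add: algebra_simps)
    moreover have "Qh 1 (fst q) (snd q) = 0" using c(4) unfolding L by (simp add: algebra_simps)
    moreover have "Lh 1 (fst q) (snd q) \<noteq> 0" using L c(1) by simp
    ultimately show ?thesis using affP[of "fst q" "snd q", symmetric] affQ[of "fst q" "snd q", symmetric]
      affL[of "fst q" "snd q", symmetric] unfolding aff_def by simp
  qed
  have Mq: "mat 1 - Df Lh Ph Qh (x,y) = (\<chi> i j. if i = 1 then (if j = 1 then gxv a x y / (k1 + k2 * x + k3 * y)
        else gyv a x y / (k1 + k2 * x + k3 * y))
      else (if j = 1 then gxv b x y / (k1 + k2 * x + k3 * y)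
        else gyv b x y / (k1 + k2 * x + k3 * y)))"
    if hh: "qv a x y = 0" "qv b x y = 0" "k1 + k2 * x + k3 * y \<noteq> 0" for x y
  proof -
    have d11: "deriv (\<lambda>s. s - qv a s y / (k1 + k2 * s + k3 * y)) x = 1 - gxv a x y / (k1 + k2 * x + k3 * y)"
      by (rule deriv_quot1[OF qv_d1[of a y x] lf_d1[of k1 k2 k3 y x]]) (use hh in auto)
    have d12: "deriv (\<lambda>s. x - qv a x s / (k1 + k2 * x + k3 * s)) y = - (gyv a x y / (k1 + k2 * x + k3 * y))"
      by (rule deriv_quot0[OF qv_d2[of a x y] lf_d2[of k1 k2 x k3 y]]) (use hh in auto)
    have d21: "deriv (\<lambda>s. y - qv b s y / (k1 + k2 * s + k3 * y)) x = - (gxv b x y / (k1 + k2 * x + k3 * y))"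
      by (rule deriv_quot0[OF qv_d1[of b y x] lf_d1[of k1 k2 k3 y x]]) (use hh in auto)
    have d22: "deriv (\<lambda>s. s - qv b x s / (k1 + k2 * x + k3 * s)) y = 1 - gyv b x y / (k1 + k2 * x + k3 * y)"
      by (rule deriv_quot1[OF qv_d2[of b x y] lf_d2[of k1 k2 x k3 y]]) (use hh in auto)
    show ?thesis
      by (simp add: vec_eq_iff forall_2 Df_def jac_def pd1_def pd2_def affP affQ affL mat_def d11 d12 d21 d22)
  qed
  have jacq: "jac (aff Ph) (aff Qh) (x,y) = (\<chi> i j. if i = 1 then (if j = 1 then gxv a x y
        else gyv a x y) else (if j = 1 then gxv b x y else gyv b x y))" for x y
    by (simp add: vec_eq_iff forall_2 jac_def pd1_def pd2_def affP affQ DERIV_imp_deriv[OF qv_d1] DERIV_imp_deriv[OF qv_d2])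
  have per: "aff Ph (fst (p i)) (snd (p i)) = 0 \<and> aff Qh (fst (p i)) (snd (p i)) = 0
           \<and> aff Lh (fst (p i)) (snd (p i)) \<noteq> 0
           \<and> jac (aff Ph) (aff Qh) (p i)
               = mat (aff Lh (fst (p i)) (snd (p i))) ** (mat 1 - Df Lh Ph Qh (p i))
           \<and> qv a (fst (p i)) (snd (p i)) = 0 \<and> qv b (fst (p i)) (snd (p i)) = 0
           \<and> Jv a b (fst (p i)) (snd (p i)) \<noteq> 0
           \<and> 1 / ((aff Lh (fst (p i)) (snd (p i)))\<^sup>2 * det (mat 1 - Df Lh Ph Qh (p i)))
              = (1 + 0 * fst (p i) + 0 * snd (p i)) / Jv a b (fst (p i)) (snd (p i))
           \<and> fst (p i) / ((aff Lh (fst (p i)) (snd (p i)))\<^sup>2 * det (mat 1 - Df Lh Ph Qh (p i)))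
              = (0 + 1 * fst (p i) + 0 * snd (p i)) / Jv a b (fst (p i)) (snd (p i))
           \<and> snd (p i) / ((aff Lh (fst (p i)) (snd (p i)))\<^sup>2 * det (mat 1 - Df Lh Ph Qh (p i)))
              = (0 + 0 * fst (p i) + 1 * snd (p i)) / Jv a b (fst (p i)) (snd (p i))
           \<and> trace (mat 1 - Df Lh Ph Qh (p i)) / (aff Lh (fst (p i)) (snd (p i)) * det (mat 1 - Df Lh Ph Qh (p i)))
              = ((a 4 + b 5) + (2 * a 2 + b 6) * fst (p i) + (a 6 + 2 * b 3) * snd (p i)) / Jv a b (fst (p i)) (snd (p i))
           \<and> 1 / (aff Lh (fst (p i)) (snd (p i)) * det (mat 1 - Df Lh Ph Qh (p i)))
              = (k1 + k2 * fst (p i) + k3 * snd (p i)) / Jv a b (fst (p i)) (snd (p i))"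
    if i4: "i < 4" for i
  proof -
    have pin: "fixed_off Lh Ph Qh (p i)" using assms(6) i4 by blast
    note fp = fix_pt[OF pin]
    obtain x y where xy: "p i = (x, y)" by fastforce
    define L where "L = k1 + k2 * x + k3 * y"
    have zA: "qv a x y = 0" and zB: "qv b x y = 0" and L0: "L \<noteq> 0"
      using fp unfolding xy L_def by auto
    have Laff: "aff Lh x y = L" unfolding L_def affL ..
    have M: "mat 1 - Df Lh Ph Qh (x, y) = (\<chi> i j. if i = 1 then (if j = 1 then gxv a x y / L
        else gyv a x y / L) else (if j = 1 then gxv b x y / L else gyv b x y / L))"
      unfolding L_def by (rule Mq[OF zA zB L0[unfolded L_def]])
    have Jm: "jac (aff Ph) (aff Qh) (x, y) = (\<chi> i j. if i = 1 then (if j = 1 then gxv a x y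
        else gyv a x y) else (if j = 1 then gxv b x y else gyv b x y))"
      by (rule jacq)
    have detM: "det (mat 1 - Df Lh Ph Qh (x, y)) = Jv a b x y / L^2"
      unfolding M det_2 Jv_def using L0 by (simp add: power2_eq_square field_simps)
    have trM: "trace (mat 1 - Df Lh Ph Qh (x, y)) = (gxv a x y + gyv b x y) / L"
      unfolding M trace_def sum_2 by (simp add: add_divide_distrib)
    have J0: "Jv a b x y \<noteq> 0" using assms(7) i4 detM L0 xy unfolding nondeg_def by force
    have jeq: "jac (aff Ph) (aff Qh) (x, y) = mat L ** (mat 1 - Df Lh Ph Qh (x, y))"
      unfolding M Jm using L0 by (simp add: vec_eq_iff forall_2 matrix_matrix_mult_def sum_2 mat_def)
    have gg: "gxv a x y + gyv b x y = (a 4 + b 5) + (2 * a 2 + b 6) * x + (a 6 + 2 * b 3) * y"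
      unfolding gxv_def gyv_def by (simp add: algebra_simps)
    have t1: "1 / ((aff Lh x y)\<^sup>2 * det (mat 1 - Df Lh Ph Qh (x, y))) = (1 + 0 * x + 0 * y) / Jv a b x y"
      unfolding Laff detM using L0 by simp
    have t2: "x / ((aff Lh x y)\<^sup>2 * det (mat 1 - Df Lh Ph Qh (x, y))) = (0 + 1 * x + 0 * y) / Jv a b x y"
      unfolding Laff detM using L0 by simp
    have t3: "y / ((aff Lh x y)\<^sup>2 * det (mat 1 - Df Lh Ph Qh (x, y))) = (0 + 0 * x + 1 * y) / Jv a b x y"
      unfolding Laff detM using L0 by simp
    have t4: "trace (mat 1 - Df Lh Ph Qh (x, y)) / (aff Lh x y * det (mat 1 - Df Lh Ph Qh (x, y)))
       = ((a 4 + b 5) + (2 * a 2 + b 6) * x + (a 6 + 2 * b 3) * y) / Jv a b x y"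
      unfolding Laff detM trM gg[symmetric] using L0 by (simp add: power2_eq_square)
    have t5: "1 / (aff Lh x y * det (mat 1 - Df Lh Ph Qh (x, y))) = (k1 + k2 * x + k3 * y) / Jv a b x y"
      unfolding Laff detM using L0 by (simp add: power2_eq_square L_def[symmetric])
    show ?thesis unfolding xy fst_conv snd_conv
      using zA zB L0 J0 affP affQ jeq t1 t2 t3 t4 t5 Laff by simp
  qed
  have dist: "p i \<noteq> p j" if "i < 4" "j < 4" "i \<noteq> j" for i j
    using assms(5) that unfolding inj_on_def by blast
  have EJ4: "(\<Sum>i<4. (al + be * fst (p i) + ga * snd (p i)) / Jv a b (fst (p i)) (snd (p i))) = 0" for al be ga
    unfolding sum4
    by (rule EJ) (use per[of 0] per[of 1] per[of 2] per[of 3] dist[of 0 1] dist[of 0 2] dist[of 0 3]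
        dist[of 1 2] dist[of 1 3] dist[of 2 3] in auto)
  have s1: "(\<Sum>i<4. 1 / ((aff Lh (fst (p i)) (snd (p i)))\<^sup>2 * det (mat 1 - Df Lh Ph Qh (p i)))) = 0"
    using EJ4[of 1 0 0] by (subst sum.cong[OF refl]) (use per in auto)
  have s2: "(\<Sum>i<4. fst (p i) / ((aff Lh (fst (p i)) (snd (p i)))\<^sup>2 * det (mat 1 - Df Lh Ph Qh (p i)))) = 0"
    using EJ4[of 0 1 0] by (subst sum.cong[OF refl]) (use per in auto)
  have s3: "(\<Sum>i<4. snd (p i) / ((aff Lh (fst (p i)) (snd (p i)))\<^sup>2 * det (mat 1 - Df Lh Ph Qh (p i)))) = 0"
    using EJ4[of 0 0 1] by (subst sum.cong[OF refl]) (use per in auto)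
  have s4: "(\<Sum>i<4. trace (mat 1 - Df Lh Ph Qh (p i)) / (aff Lh (fst (p i)) (snd (p i)) * det (mat 1 - Df Lh Ph Qh (p i)))) = 0"
    using EJ4[of "a 4 + b 5" "2 * a 2 + b 6" "a 6 + 2 * b 3"] by (subst sum.cong[OF refl]) (use per in auto)
  have s5: "(\<Sum>i<4. 1 / (aff Lh (fst (p i)) (snd (p i)) * det (mat 1 - Df Lh Ph Qh (p i)))) = 0"
    using EJ4[of k1 k2 k3] by (subst sum.cong[OF refl]) (use per in auto)
  show ?thesis using per s1 s2 s3 s4 s5 by blast
qed

end
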